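(* Let $\lambda>0$, $\mu>0$ and $0<b<a<1$, and define $$g(\lambda)=\frac{\frac{\mu}{\lambda+\mu}+\frac{a\mu}{\lambda+a\mu}+\frac{b\mu}{\lambda+b\mu}+0\cdot\frac{2}{\lambda}}{\frac{1}{\lambda+\mu}+\frac{1}{\lambda+a\mu}+\frac{1}{\lambda+b\mu}+\frac{2}{\lambda}}.$$ If $g(\lambda)>\lambda$ (the stability condition of the 4-phase model), then $g(\lambda)<b\mu$.
   Context: Here $g(\lambda)$ is the long-run average service rate (for large queue length) of the following 4-phase vacation queue: a continuous-time Markov chain on states $(n,i)$, $n\ge 0$, $i\in\{1,2,3,4\}$, with $n$ the number of customers and $i$ the server phase; for $n\ge1$ and $i\in\{1,2,3\}$, $(n,i)\to(n-1,i+1)$ at rate $\mu_i$ (where $\mu_1=\mu,\mu_2=a\mu,\mu_3=b\mu$) and $(n,i)\to(n+1,i+1)$ at rate $\lambda$; $(0,i)\to(1,i+1)$ at rate $\lambda$ for $i\in\{1,2,3\}$; and $(n,4)\to(n+2,1)$ at rate $\lambda/2$. The conclusion means this model's average service rate is below that of an $M/M/1$ queue with service rate $b\mu$. *)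

theory Defs
  imports Complex_Main
begin

text \<open>Long-run average service rate of the 4-phase vacation queue.
  The numerator keeps the literal term 0 * (2/lambda) of the paper (phase 4 serves nobody).\<close>
definition g :: "real \<Rightarrow> real \<Rightarrow> real \<Rightarrow> real \<Rightarrow> real" where
  "g mu a b lam =
     (mu / (lam + mu) + a * mu / (lam + a * mu) + b * mu / (lam + b * mu) + 0 * (2 / lam))
     / (1 / (lam + mu) + 1 / (lam + a * mu) + 1 / (lam + b * mu) + 2 / lam)"

end

theory Submission
  imports Defs
begin

theorem theorem2:
  fixes lam mu a b :: real
  assumes "lam > 0" and "mu > 0" and "0 < b" and "b < a" and "a < 1"
    and "g mu a b lam > lam"
  shows "g mu a b lam < b * mu"
proof -
  define r1 where "r1 = mu / (lam + mu)"
  define r2 where "r2 = a * mu / (lam + a * mu)"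
  define r3 where "r3 = b * mu / (lam + b * mu)"
  have am: "a * mu > 0" "b * mu > 0" using assms by (simp_all add: mult_pos_pos)
  have pp: "lam + mu > 0" "lam + a*mu > 0" "lam + b*mu > 0" using assms(1,2) am by auto
  have nz: "lam + mu \<noteq> 0" "lam + a*mu \<noteq> 0" "lam + b*mu \<noteq> 0" "lam \<noteq> 0" using pp assms(1) by auto
  have q1: "1 / (lam + mu) = (1 - r1) / lam"
  proof -
    have "1 - r1 = (lam + mu) / (lam + mu) - mu / (lam + mu)" using nz by (simp add: r1_def)
    also have "... = lam / (lam + mu)" by (simp only: diff_divide_distrib[symmetric] add_diff_cancel_right')
    finally show ?thesis using nz by simp
  qed
  have q2: "1 / (lam + a*mu) = (1 - r2) / lam"
  proof -
    have "1 - r2 = (lam + a*mu) / (lam + a*mu) - a*mu / (lam + a*mu)" using nz by (simp add: r2_def)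
    also have "... = lam / (lam + a*mu)" by (simp only: diff_divide_distrib[symmetric] add_diff_cancel_right')
    finally show ?thesis using nz by simp
  qed
  have q3: "1 / (lam + b*mu) = (1 - r3) / lam"
  proof -
    have "1 - r3 = (lam + b*mu) / (lam + b*mu) - b*mu / (lam + b*mu)" using nz by (simp add: r3_def)
    also have "... = lam / (lam + b*mu)" by (simp only: diff_divide_distrib[symmetric] add_diff_cancel_right')
    finally show ?thesis using nz by simp
  qed
  have r1: "r1 < 1" unfolding r1_def using assms by simp
  have r2: "r2 < 1" unfolding r2_def using pp(2) assms(1) by (simp add: divide_less_eq)
  have r3: "r3 < 1" "r3 > 0" unfolding r3_def using pp(3) am(2) assms(1) by (simp_all add: divide_less_eq)
  define N where "N = r1 + r2 + r3"
  have N5: "N < 5" using r1 r2 r3 N_def by simp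
  have den: "(1 - r1) / lam + (1 - r2) / lam + (1 - r3) / lam + 2 / lam = (5 - N) / lam"
    unfolding N_def by (simp add: add_divide_distrib[symmetric])
  have gN: "g mu a b lam = lam * N / (5 - N)"
  proof -
    have "g mu a b lam = N / ((5 - N) / lam)"
      unfolding g_def q1 q2 q3 den by (simp add: r1_def r2_def r3_def N_def)
    thus ?thesis by simp
  qed
  have "lam * N / (5 - N) > lam" using assms(6) gN by simp
  hence "lam * N > lam * (5 - N)" using N5 by (simp add: less_divide_eq mult.commute)
  hence "N > 5 - N" using assms(1) by simp
  hence N25: "N > 5/2" by simp
  have hr3: "r3 > 1/2" using N25 r1 r2 N_def by simp
  have o3: "1 - r3 = lam / (lam + b*mu)"
  proof -
    have "1 - r3 = (lam + b*mu) / (lam + b*mu) - b*mu / (lam + b*mu)" using nz by (simp add: r3_def)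
    also have "... = lam / (lam + b*mu)" by (simp only: diff_divide_distrib[symmetric] add_diff_cancel_right')
    finally show ?thesis .
  qed
  have bm: "b * mu = lam * r3 / (1 - r3)" unfolding o3 using nz by (simp add: r3_def)
  have Nlt: "N < 2 + r3" using r1 r2 N_def by simp
  have "N / (5 - N) < r3 / (1 - r3)"
  proof -
    have e: "N * (1 - r3) - r3 * (5 - N) = N - 5 * r3" by (simp add: algebra_simps)
    have "N * (1 - r3) < r3 * (5 - N)" using Nlt hr3 e by linarith
    thus ?thesis using N5 r3 by (simp add: field_simps)
  qed
  thus ?thesis unfolding gN bm using assms(1)
    by (metis mult.commute mult_strict_left_mono times_divide_eq_right)
qed

end
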